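(* Consider the half-duplex (HD) single-stage relay selection (SRS) scheme described in the context with $K\ge1$ relays, with $\varpi=0$, thresholds $\gamma_{th_j}=2^{2R_{D_j}}-1$ for $j=1,2$, and power coefficients satisfying $0<a_1<a_2$, $a_1+a_2=1$, $a_2>a_1\gamma_{th_2}$. Then its diversity order equals the number of relays: $$-\lim_{\rho\to\infty}\frac{\log P_{SRS}^{HD}(\rho)}{\log\rho}=K .$$
   Context: Network model. A base station (BS) is at the origin of the plane. There are $K\ge 1$ relays $R_1,\dots,R_K$ whose positions are i.i.d. uniformly distributed in the disc of radius $R_{\mathcal D}>0$ centred at the origin; $d_{SR_i}$ is the distance from the BS to $R_i$. Two users $D_1,D_2$ are at fixed points of the plane at distances $d_1,d_2>0$ from the BS, and $d_{R_iD_j}$ is the Euclidean distance between $R_i$ and $D_j$. Let $\alpha>0$ be the path loss exponent. The random variables $g_{SR_i}$, $g_{R_iD_1}$, $g_{R_iD_2}$ ($i=1,\dots,K$) are exponentially distributed with mean $1$ (squared magnitudes of $\mathcal{CN}(0,1)$ Rayleigh coefficients), $Z_i$ is exponentially distributed with mean $\Omega_{LI}>0$, and all of these are mutually independent and independent of the relay positions. Put $X_i=g_{SR_i}/(1+d_{SR_i}^\alpha)$ and $Y_{ji}=g_{R_iD_j}/(1+d_{R_iD_j}^\alpha)$. Let $\rho>0$ be the transmit SNR, $a_1,a_2$ power allocation coefficients, and $\varpi\in\{0,1\}$ the duplex factor. Define $\gamma_{D_2\to R_i}=\frac{\rho X_i a_2}{\rho X_i a_1+\rho\varpi Z_i+1}$,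 $\gamma^{(i)}_{D_2\to D_1}=\frac{\rho Y_{1i}a_2}{\rho Y_{1i}a_1+1}$, $\gamma^{(i)}_{D_2}=\frac{\rho Y_{2i}a_2}{\rho Y_{2i}a_1+1}$. Target rates $R_{D_1},R_{D_2}>0$ are given; in HD mode $\varpi=0$ and $\gamma_{th_j}=2^{2R_{D_j}}-1$. SRS scheme: with $W_i=\min\{\gamma_{D_2\to R_i},\gamma^{(i)}_{D_2\to D_1},\gamma^{(i)}_{D_2}\}$, the outage probability is $P_{SRS}(\rho)=\Pr(\max_{1\le i\le K}W_i<\gamma_{th_2})$; $P_{SRS}^{HD}$ denotes it in HD mode. *)

theory Defs
  imports "HOL-Probability.Probability"
begin

text \<open>The plane is modelled as the complex numbers; the base station sits at 0.
 Per-relay randomness: (position, g_SR, g_RD1, g_RD2, Z), all independent.\<close>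

definition exp_measure :: "real \<Rightarrow> real measure" where
  "exp_measure mean = density lborel (\<lambda>x. ennreal (exponential_density (1 / mean) x))"

definition relay_measure :: "real \<Rightarrow> real \<Rightarrow> (complex \<times> real \<times> real \<times> real \<times> real) measure" where
  "relay_measure RD OmegaLI =
     uniform_measure lborel (cball (0::complex) RD) \<Otimes>\<^sub>M
     (exp_measure 1 \<Otimes>\<^sub>M (exp_measure 1 \<Otimes>\<^sub>M (exp_measure 1 \<Otimes>\<^sub>M exp_measure OmegaLI)))"

definition network_measure :: "nat \<Rightarrow> real \<Rightarrow> real \<Rightarrow> (nat \<Rightarrow> complex \<times> real \<times> real \<times> real \<times> real) measure" where
  "network_measure K RD OmegaLI = PiM {..<K} (\<lambda>_. relay_measure RD OmegaLI)"

definition sinr_relay :: "real \<Rightarrow> real \<Rightarrow> real \<Rightarrow> real \<Rightarrow> real \<Rightarrow> real \<Rightarrow> real" where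
  "sinr_relay \<rho> a1 a2 w X Z = \<rho> * X * a2 / (\<rho> * X * a1 + \<rho> * w * Z + 1)"

definition sinr_user :: "real \<Rightarrow> real \<Rightarrow> real \<Rightarrow> real \<Rightarrow> real" where
  "sinr_user \<rho> a1 a2 Y = \<rho> * Y * a2 / (\<rho> * Y * a1 + 1)"

definition W_relay ::
  "real \<Rightarrow> complex \<Rightarrow> complex \<Rightarrow> real \<Rightarrow> real \<Rightarrow> real \<Rightarrow> real \<Rightarrow>
   complex \<times> real \<times> real \<times> real \<times> real \<Rightarrow> real" where
  "W_relay alpha D1 D2 \<rho> a1 a2 w r =
     (case r of (p, gSR, gRD1, gRD2, Z) \<Rightarrow>
       let X = gSR / (1 + cmod p powr alpha);
           Y1 = gRD1 / (1 + cmod (p - D1) powr alpha);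
           Y2 = gRD2 / (1 + cmod (p - D2) powr alpha)
       in min (sinr_relay \<rho> a1 a2 w X Z) (min (sinr_user \<rho> a1 a2 Y1) (sinr_user \<rho> a1 a2 Y2)))"

definition P_SRS ::
  "nat \<Rightarrow> real \<Rightarrow> real \<Rightarrow> real \<Rightarrow> complex \<Rightarrow> complex \<Rightarrow> real \<Rightarrow> real \<Rightarrow> real \<Rightarrow> real \<Rightarrow> real \<Rightarrow> real" where
  "P_SRS K RD OmegaLI alpha D1 D2 a1 a2 w gth2 \<rho> =
     measure (network_measure K RD OmegaLI)
       {\<omega> \<in> space (network_measure K RD OmegaLI).
          Max ((\<lambda>i. W_relay alpha D1 D2 \<rho> a1 a2 w (\<omega> i)) ` {..<K}) < gth2}"

definition P_SRS_HD where
  "P_SRS_HD K RD OmegaLI alpha D1 D2 a1 a2 gth2 \<rho> = P_SRS K RD OmegaLI alpha D1 D2 a1 a2 0 gth2 \<rho>"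

end

theory Submission
  imports Defs "HOL-Real_Asymp.Real_Asymp"
begin

lemma lim_aux: "((\<lambda>x. real K * (ln x - c) / ln x) \<longlongrightarrow> real K) at_top"
  by real_asymp

lemma U_prob: assumes "RD > 0" shows "prob_space (uniform_measure lborel (cball (0::complex) RD))"
proof (rule prob_space_uniform_measure)
  have "emeasure lborel (cball (0::complex) RD) = ennreal (unit_ball_vol (DIM(complex)) * RD ^ DIM(complex))"
    using assms by (intro emeasure_cball) simp
  then show "emeasure lborel (cball (0::complex) RD) \<noteq> 0" using assms by (simp add: unit_ball_vol_2)
  show "emeasure lborel (cball (0::complex) RD) \<noteq> \<infinity>" using emeasure_lborel_cball_finite[of 0 RD] by (simp add: less_top[symmetric])
qed

lemma E_prob: assumes "m > 0" shows "prob_space (exp_measure m)"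
  unfolding exp_measure_def using assms by (intro prob_space_exponential_density) simp

lemma E_le: assumes "m > 0" shows "emeasure (exp_measure m) {..a} = erlang_CDF 0 (1/m) a"
  unfolding exp_measure_def using assms by (intro emeasure_erlang_density) simp

lemma space_E[simp]: "space (exp_measure m) = UNIV" and sets_E[simp]: "sets (exp_measure m) = sets borel"
  unfolding exp_measure_def by auto

lemma space_U[simp]: "space (uniform_measure lborel (cball (0::complex) RD)) = UNIV"
  and sets_U[simp]: "sets (uniform_measure lborel (cball (0::complex) RD)) = sets borel"
  by auto

lemma R_prob: assumes "RD > 0" "Om > 0" shows "prob_space (relay_measure RD Om)"
  unfolding relay_measure_def
  by (intro prob_space_pair U_prob E_prob assms) simp_all

lemma space_R[simp]: "space (relay_measure RD Om) = UNIV"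
  unfolding relay_measure_def by (simp add: space_pair_measure)

lemma emeasure_R_Times:
  assumes "RD > 0" "Om > 0"
    and [measurable]: "B0 \<in> sets borel" "B1 \<in> sets borel" "B2 \<in> sets borel" "B3 \<in> sets borel" "B4 \<in> sets borel"
  shows "emeasure (relay_measure RD Om) (B0 \<times> B1 \<times> B2 \<times> B3 \<times> B4) =
     emeasure (uniform_measure lborel (cball 0 RD)) B0 * (emeasure (exp_measure 1) B1 *
     (emeasure (exp_measure 1) B2 * (emeasure (exp_measure 1) B3 * emeasure (exp_measure Om) B4)))"
proof -
  have sf: "sigma_finite_measure M" if "prob_space M" for M :: "'a measure"
    using that by (simp add: prob_space_imp_sigma_finite)
  have p1: "prob_space (exp_measure 1)" by (rule E_prob) simp
  have p2: "prob_space (exp_measure Om)" by (rule E_prob) fact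
  have p3: "prob_space (exp_measure 1 \<Otimes>\<^sub>M exp_measure Om)" by (intro prob_space_pair p1 p2)
  have p4: "prob_space (exp_measure 1 \<Otimes>\<^sub>M (exp_measure 1 \<Otimes>\<^sub>M exp_measure Om))" by (intro prob_space_pair p1 p3)
  have p5: "prob_space (exp_measure 1 \<Otimes>\<^sub>M (exp_measure 1 \<Otimes>\<^sub>M (exp_measure 1 \<Otimes>\<^sub>M exp_measure Om)))" by (intro prob_space_pair p1 p4)
  show ?thesis unfolding relay_measure_def
    apply (subst sigma_finite_measure.emeasure_pair_measure_Times[OF sf[OF p5]])
      apply simp apply simp
    apply (subst sigma_finite_measure.emeasure_pair_measure_Times[OF sf[OF p4]])
      apply simp apply simp
    apply (subst sigma_finite_measure.emeasure_pair_measure_Times[OF sf[OF p3]])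
      apply simp apply simp
    apply (subst sigma_finite_measure.emeasure_pair_measure_Times[OF sf[OF p2]])
      apply simp apply simp
    apply simp
    done
qed

lemma W_meas[measurable]: "W_relay alpha D1 D2 \<rho> a1 a2 w \<in> borel_measurable (relay_measure RD OmegaLI)"
  unfolding W_relay_def relay_measure_def sinr_relay_def sinr_user_def Let_def exp_measure_def
  by measurable

lemma P_eq:
  assumes "K \<ge> 1" "RD > 0" "Om > 0"
  shows "P_SRS K RD Om alpha D1 D2 a1 a2 w g \<rho> =
    measure (relay_measure RD Om) {r \<in> space (relay_measure RD Om). W_relay alpha D1 D2 \<rho> a1 a2 w r < g} ^ K"
proof -
  let ?R = "relay_measure RD Om"
  let ?A = "{r \<in> space ?R. W_relay alpha D1 D2 \<rho> a1 a2 w r < g}"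
  interpret R: prob_space ?R using R_prob assms by blast
  interpret F: finite_product_prob_space "\<lambda>_. ?R" "{..<K}"
    by unfold_locales simp
  have Am: "?A \<in> sets ?R" by measurable
  have ne: "{..<K} \<noteq> {}" using assms by (auto simp: lessThan_empty_iff)
  have "{\<omega> \<in> space (network_measure K RD Om).
          Max ((\<lambda>i. W_relay alpha D1 D2 \<rho> a1 a2 w (\<omega> i)) ` {..<K}) < g} = Pi\<^sub>E {..<K} (\<lambda>_. ?A)"
    unfolding network_measure_def space_PiM using ne by (auto simp: PiE_def Pi_def)
  then have "P_SRS K RD Om alpha D1 D2 a1 a2 w g \<rho> = measure (PiM {..<K} (\<lambda>_. ?R)) (Pi\<^sub>E {..<K} (\<lambda>_. ?A))"
    unfolding P_SRS_def network_measure_def by simp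
  also have "\<dots> = (\<Prod>i<K. measure ?R ?A)"
    by (rule F.finite_measure_PiM_emb) (use Am in blast)
  finally show ?thesis by simp
qed

lemma sets_R_Times:
  assumes [measurable]: "B0 \<in> sets borel" "B1 \<in> sets borel" "B2 \<in> sets borel" "B3 \<in> sets borel" "B4 \<in> sets borel"
  shows "B0 \<times> B1 \<times> B2 \<times> B3 \<times> B4 \<in> sets (relay_measure RD Om)"
  unfolding relay_measure_def by (intro pair_measureI) (simp_all add: assms)

lemma measure_R_Times:
  assumes "RD > 0" "Om > 0"
    and [measurable]: "B0 \<in> sets borel" "B1 \<in> sets borel" "B2 \<in> sets borel" "B3 \<in> sets borel" "B4 \<in> sets borel"
  shows "measure (relay_measure RD Om) (B0 \<times> B1 \<times> B2 \<times> B3 \<times> B4) =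
     measure (uniform_measure lborel (cball 0 RD)) B0 * (measure (exp_measure 1) B1 *
     (measure (exp_measure 1) B2 * (measure (exp_measure 1) B3 * measure (exp_measure Om) B4)))"
  unfolding measure_def by (simp add: emeasure_R_Times[OF assms] enn2real_mult)

lemma thr:
  fixes \<rho> x a1 a2 g :: real
  assumes "0 < a1" "a1 * g < a2" "0 < g" "0 \<le> \<rho>" "0 \<le> x"
  shows "(\<rho> * x * a2 / (\<rho> * x * a1 + 1) < g) \<longleftrightarrow> (\<rho> * x < g / (a2 - a1 * g))"
proof -
  have "0 \<le> \<rho> * x * a1" using assms by simp
  then have d: "\<rho> * x * a1 + 1 > 0" by linarith
  have e: "a2 - a1 * g > 0" using assms by simp
  have "(\<rho> * x * a2 / (\<rho> * x * a1 + 1) < g) \<longleftrightarrow> \<rho> * x * a2 < g * (\<rho> * x * a1 + 1)"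
    using d by (simp add: divide_less_eq)
  also have "\<dots> \<longleftrightarrow> (\<rho> * x) * (a2 - a1 * g) < g" by (simp add: algebra_simps)
  also have "\<dots> \<longleftrightarrow> \<rho> * x < g / (a2 - a1 * g)" using e by (simp add: less_divide_eq)
  finally show ?thesis .
qed

lemma hx:
  fixes c C y t \<rho> :: real
  assumes "0 < c" "c \<le> C" "t * C / \<rho> < y" "0 < \<rho>" "0 < t"
  shows "t \<le> \<rho> * (y / c)"
proof -
  have "t * C < \<rho> * y" using assms by (simp add: divide_less_eq mult.commute)
  moreover have "t * c \<le> t * C" using assms by simp
  ultimately have "t * c < \<rho> * y" by linarith
  then show ?thesis using assms by (simp add: le_divide_eq mult.commute mult.left_commute)
qed

lemma q_bounds:
  fixes RD Om alpha a1 a2 g t \<rho> :: real and D1 D2 :: complex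
  assumes RD: "RD > 0" and Om: "Om > 0" and al: "alpha > 0" and a1: "0 < a1" and ag: "a1 * g < a2"
    and g: "0 < g" and t: "t = g / (a2 - a1 * g)" and rho: "\<rho> \<ge> t" "\<rho> > 0"
  shows "t / (4 * \<rho>) \<le> measure (relay_measure RD Om)
            {r \<in> space (relay_measure RD Om). W_relay alpha D1 D2 \<rho> a1 a2 0 r < g}"
    and "measure (relay_measure RD Om)
            {r \<in> space (relay_measure RD Om). W_relay alpha D1 D2 \<rho> a1 a2 0 r < g}
         \<le> t * ((1 + RD powr alpha) + (1 + (RD + cmod D1) powr alpha) + (1 + (RD + cmod D2) powr alpha)) / \<rho>"
proof -
  let ?R = "relay_measure RD Om"
  let ?U = "uniform_measure lborel (cball (0::complex) RD)"
  let ?E = "exp_measure 1"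
  let ?EO = "exp_measure Om"
  define A where "A = {r \<in> space ?R. W_relay alpha D1 D2 \<rho> a1 a2 0 r < g}"
  have tpos: "t > 0" using t g ag by simp
  have Am: "A \<in> sets ?R" unfolding A_def by measurable
  interpret R: prob_space ?R using R_prob RD Om by blast
  interpret U: prob_space ?U using U_prob RD by blast
  interpret E: prob_space ?E using E_prob by simp
  interpret EO: prob_space ?EO using E_prob Om by blast
  have E0: "emeasure ?E {..<0} = 0"
  proof -
    have "emeasure ?E {..<0} \<le> emeasure ?E {..0}" by (rule emeasure_mono) auto
    also have "\<dots> = 0" using E_le[of 1 0] by (simp add: erlang_CDF_at0)
    finally show ?thesis by simp
  qed
  have U0: "emeasure ?U (- cball 0 RD) = 0"
    by (subst emeasure_uniform_measure) auto
  define N where "N = (- cball 0 RD) \<times> (UNIV::real set) \<times> (UNIV::real set) \<times> (UNIV::real set) \<times> (UNIV::real set)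
     \<union> (UNIV::complex set) \<times> {..<0::real} \<times> (UNIV::real set) \<times> (UNIV::real set) \<times> (UNIV::real set)
     \<union> (UNIV::complex set) \<times> (UNIV::real set) \<times> {..<0::real} \<times> (UNIV::real set) \<times> (UNIV::real set)
     \<union> (UNIV::complex set) \<times> (UNIV::real set) \<times> (UNIV::real set) \<times> {..<0::real} \<times> (UNIV::real set)"
  have N1: "(- cball 0 RD) \<times> (UNIV::real set) \<times> (UNIV::real set) \<times> (UNIV::real set) \<times> (UNIV::real set) \<in> null_sets ?R"
  proof -
    have c: "(- cball (0::complex) RD) \<in> sets borel" using borel_closed[OF closed_cball] by (rule borel_comp)
    have "(- cball 0 RD) \<times> (UNIV::real set) \<times> (UNIV::real set) \<times> (UNIV::real set) \<times> (UNIV::real set) =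
       {r \<in> space ?R. fst r \<in> - cball 0 RD}" by auto
    also have "\<dots> \<in> sets ?R" unfolding relay_measure_def using c by measurable
    finally have m: "(- cball 0 RD) \<times> (UNIV::real set) \<times> (UNIV::real set) \<times> (UNIV::real set) \<times> (UNIV::real set) \<in> sets ?R" .
    show ?thesis
      by (rule null_setsI[OF _ m], subst emeasure_R_Times[OF RD Om]) (simp_all add: U0 c)
  qed
  have N2: "(UNIV::complex set) \<times> {..<0::real} \<times> (UNIV::real set) \<times> (UNIV::real set) \<times> (UNIV::real set) \<in> null_sets ?R"
    by (rule null_setsI[OF _ sets_R_Times], subst emeasure_R_Times[OF RD Om]) (simp_all add: E0)
  have N3: "(UNIV::complex set) \<times> (UNIV::real set) \<times> {..<0::real} \<times> (UNIV::real set) \<times> (UNIV::real set) \<in> null_sets ?R"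
    by (rule null_setsI[OF _ sets_R_Times], subst emeasure_R_Times[OF RD Om]) (simp_all add: E0)
  have N4: "(UNIV::complex set) \<times> (UNIV::real set) \<times> (UNIV::real set) \<times> {..<0::real} \<times> (UNIV::real set) \<in> null_sets ?R"
    by (rule null_setsI[OF _ sets_R_Times], subst emeasure_R_Times[OF RD Om]) (simp_all add: E0)
  have N: "N \<in> null_sets ?R" unfolding N_def using N1 N2 N3 N4 by (intro null_sets.Un)
  have AN: "measure ?R A = measure ?R (A - N)" using measure_Diff_null_set[OF Am N] by simp
  have mE: "measure ?E {..x} = 1 - exp (- x)" if "x \<ge> 0" for x
    using E_le[of 1 x] that by (simp add: measure_def erlang_CDF_0)
  have mE1: "measure ?E UNIV = 1" using E.prob_space by simp
  have mEO: "measure ?EO UNIV = 1" using EO.prob_space by simp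
  have mU: "measure ?U UNIV = 1" using U.prob_space by simp
  define a where "a = t / (2 * \<rho>)"
  have a0: "0 < a" "a \<le> 1 / 2" using tpos rho by (auto simp: a_def)
  define L where "L = (UNIV::complex set) \<times> {..a} \<times> (UNIV::real set) \<times> (UNIV::real set) \<times> (UNIV::real set)"
  have LA: "L - N \<subseteq> A"
  proof
    fix r assume r: "r \<in> L - N"
    obtain p g0 g1 g2 z where rr: "r = (p, g0, g1, g2, z)" by (cases r) auto
    have g0: "0 \<le> g0" "g0 \<le> a" using r unfolding rr L_def N_def by auto
    define c0 where "c0 = 1 + cmod p powr alpha"
    have c0: "1 \<le> c0" unfolding c0_def by simp
    have "g0 \<le> g0 * c0" using mult_left_mono[OF c0 g0(1)] by simp
    then have X: "0 \<le> g0 / c0" "g0 / c0 \<le> g0" using g0 c0 by (auto simp: divide_le_eq)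
    have "\<rho> * (g0 / c0) \<le> \<rho> * a" using X g0 rho by (intro mult_left_mono) auto
    also have "\<rho> * a = t / 2" using rho by (simp add: a_def)
    finally have "\<rho> * (g0 / c0) \<le> t / 2" .
    then have "\<rho> * (g0 / c0) < g / (a2 - a1 * g)" using tpos t by linarith
    then have "sinr_relay \<rho> a1 a2 0 (g0 / c0) z < g"
      unfolding sinr_relay_def using thr[OF a1 ag g _ X(1), of \<rho>] rho by simp
    then have "W_relay alpha D1 D2 \<rho> a1 a2 0 r < g"
      unfolding rr W_relay_def Let_def c0_def by simp
    then show "r \<in> A" unfolding A_def by simp
  qed
  have Lm: "L \<in> sets ?R" unfolding L_def by (intro sets_R_Times) auto
  have "measure ?R L = 1 - exp (- a)"
    unfolding L_def by (subst measure_R_Times[OF RD Om]) (simp_all add: mE[of a] a0 less_imp_le mE1 mEO mU)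
  moreover have "a / 2 \<le> 1 - exp (- a)"
  proof -
    have "1 + a \<le> exp a" by (rule exp_ge_add_one_self)
    then have "exp (- a) \<le> 1 / (1 + a)" using a0 by (simp add: exp_minus field_simps)
    also have "1 / (1 + a) \<le> 1 - a / 2" using a0 by (simp add: field_simps)
    finally show ?thesis by simp
  qed
  moreover have "measure ?R L = measure ?R (L - N)" using measure_Diff_null_set[OF Lm N] by simp
  moreover have "measure ?R (L - N) \<le> measure ?R A" using LA Am by (rule R.finite_measure_mono)
  moreover have "a / 2 = t / (4 * \<rho>)" by (simp add: a_def)
  ultimately show "t / (4 * \<rho>) \<le> measure ?R {r \<in> space ?R. W_relay alpha D1 D2 \<rho> a1 a2 0 r < g}"
    unfolding A_def by linarith
  define C0 where "C0 = 1 + RD powr alpha"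
  define C1 where "C1 = 1 + (RD + cmod D1) powr alpha"
  define C2 where "C2 = 1 + (RD + cmod D2) powr alpha"
  define u0 where "u0 = t * C0 / \<rho>"
  define u1 where "u1 = t * C1 / \<rho>"
  define u2 where "u2 = t * C2 / \<rho>"
  have u: "0 \<le> u0" "0 \<le> u1" "0 \<le> u2" using tpos rho
    by (auto simp: u0_def u1_def u2_def C0_def C1_def C2_def intro!: divide_nonneg_pos add_nonneg_nonneg)
  define S0 where "S0 = (UNIV::complex set) \<times> {..u0} \<times> (UNIV::real set) \<times> (UNIV::real set) \<times> (UNIV::real set)"
  define S1 where "S1 = (UNIV::complex set) \<times> (UNIV::real set) \<times> {..u1} \<times> (UNIV::real set) \<times> (UNIV::real set)"
  define S2 where "S2 = (UNIV::complex set) \<times> (UNIV::real set) \<times> (UNIV::real set) \<times> {..u2} \<times> (UNIV::real set)"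
  have AS: "A - N \<subseteq> S0 \<union> S1 \<union> S2"
  proof
    fix r assume r: "r \<in> A - N"
    obtain p g0 g1 g2 z where rr: "r = (p, g0, g1, g2, z)" by (cases r) auto
    have gs: "0 \<le> g0" "0 \<le> g1" "0 \<le> g2" "cmod p \<le> RD" using r unfolding rr N_def by auto
    show "r \<in> S0 \<union> S1 \<union> S2"
    proof (rule ccontr)
      assume "r \<notin> S0 \<union> S1 \<union> S2"
      then have gu: "u0 < g0" "u1 < g1" "u2 < g2" unfolding rr S0_def S1_def S2_def by auto
      define c0 where "c0 = 1 + cmod p powr alpha"
      define c1 where "c1 = 1 + cmod (p - D1) powr alpha"
      define c2 where "c2 = 1 + cmod (p - D2) powr alpha"
      have c0: "0 < c0" "c0 \<le> C0" unfolding c0_def C0_def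
        using gs al by (auto intro!: add_pos_nonneg powr_mono2)
      have "cmod (p - D1) \<le> RD + cmod D1" using gs norm_triangle_ineq4[of p D1] by linarith
      then have c1: "0 < c1" "c1 \<le> C1" unfolding c1_def C1_def
        using al by (auto intro!: add_pos_nonneg powr_mono2)
      have "cmod (p - D2) \<le> RD + cmod D2" using gs norm_triangle_ineq4[of p D2] by linarith
      then have c2: "0 < c2" "c2 \<le> C2" unfolding c2_def C2_def
        using al by (auto intro!: add_pos_nonneg powr_mono2)
      have h0: "t \<le> \<rho> * (g0 / c0)" using hx[OF c0 _ rho(2) tpos] gu u0_def by simp
      have h1: "t \<le> \<rho> * (g1 / c1)" using hx[OF c1 _ rho(2) tpos] gu u1_def by simp
      have h2: "t \<le> \<rho> * (g2 / c2)" using hx[OF c2 _ rho(2) tpos] gu u2_def by simp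
      have x0: "0 \<le> g0 / c0" "0 \<le> g1 / c1" "0 \<le> g2 / c2" using gs c0 c1 c2 by auto
      have "\<not> sinr_relay \<rho> a1 a2 0 (g0 / c0) z < g"
        unfolding sinr_relay_def using thr[OF a1 ag g _ x0(1), of \<rho>] rho h0 t by simp
      moreover have "\<not> sinr_user \<rho> a1 a2 (g1 / c1) < g"
        unfolding sinr_user_def using thr[OF a1 ag g _ x0(2), of \<rho>] rho h1 t by simp
      moreover have "\<not> sinr_user \<rho> a1 a2 (g2 / c2) < g"
        unfolding sinr_user_def using thr[OF a1 ag g _ x0(3), of \<rho>] rho h2 t by simp
      moreover have "W_relay alpha D1 D2 \<rho> a1 a2 0 r < g" using r unfolding A_def by simp
      ultimately show False
        unfolding rr W_relay_def Let_def c0_def c1_def c2_def by (simp add: min_less_iff_disj)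
    qed
  qed
  have Sm: "S0 \<in> sets ?R" "S1 \<in> sets ?R" "S2 \<in> sets ?R"
    unfolding S0_def S1_def S2_def by (intro sets_R_Times; simp)+
  have mS0: "measure ?R S0 = 1 - exp (- u0)"
    unfolding S0_def by (subst measure_R_Times[OF RD Om]) (simp_all add: mE u mE1 mEO mU)
  have mS1: "measure ?R S1 = 1 - exp (- u1)"
    unfolding S1_def by (subst measure_R_Times[OF RD Om]) (simp_all add: mE u mE1 mEO mU)
  have mS2: "measure ?R S2 = 1 - exp (- u2)"
    unfolding S2_def by (subst measure_R_Times[OF RD Om]) (simp_all add: mE u mE1 mEO mU)
  have ex: "1 - exp (- x) \<le> x" for x :: real using exp_ge_add_one_self[of "- x"] by simp
  have "measure ?R A \<le> measure ?R (S0 \<union> S1 \<union> S2)"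
    unfolding AN using AS Sm by (intro R.finite_measure_mono) auto
  also have "\<dots> \<le> measure ?R (S0 \<union> S1) + measure ?R S2"
    using Sm by (intro measure_Un_le) auto
  also have "\<dots> \<le> measure ?R S0 + measure ?R S1 + measure ?R S2"
    using measure_Un_le[OF Sm(1,2)] by simp
  also have "\<dots> \<le> u0 + u1 + u2" unfolding mS0 mS1 mS2 using ex[of u0] ex[of u1] ex[of u2] by linarith
  also have "\<dots> = t * (C0 + C1 + C2) / \<rho>" unfolding u0_def u1_def u2_def by (simp add: add_divide_distrib distrib_left)
  finally show "measure ?R {r \<in> space ?R. W_relay alpha D1 D2 \<rho> a1 a2 0 r < g}
         \<le> t * ((1 + RD powr alpha) + (1 + (RD + cmod D1) powr alpha) + (1 + (RD + cmod D2) powr alpha)) / \<rho>"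
    unfolding A_def C0_def C1_def C2_def .
qed

theorem mainTheorem2:
  fixes K :: nat and RD OmegaLI alpha RD1 RD2 a1 a2 :: real and D1 D2 :: complex
  assumes "K \<ge> 1" and "RD > 0" and "OmegaLI > 0" and "alpha > 0"
    and "cmod D1 > 0" and "cmod D2 > 0"
    and "RD1 > 0" and "RD2 > 0"
    and "0 < a1" and "a1 < a2" and "a1 + a2 = 1"
    and "a2 > a1 * (2 powr (2 * RD2) - 1)"
  shows "((\<lambda>\<rho>. - ln (P_SRS_HD K RD OmegaLI alpha D1 D2 a1 a2 (2 powr (2 * RD2) - 1) \<rho>) / ln \<rho>)
           \<longlongrightarrow> real K) at_top"
proof -
  define g where "g = 2 powr (2 * RD2) - 1"
  have "(2::real) powr 0 < 2 powr (2 * RD2)" using assms by (intro powr_less_mono) auto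
  then have g: "0 < g" unfolding g_def by simp
  have ag: "a1 * g < a2" using assms unfolding g_def by simp
  define t where "t = g / (a2 - a1 * g)"
  have tpos: "t > 0" using g ag by (simp add: t_def)
  define C where "C = (1 + RD powr alpha) + (1 + (RD + cmod D1) powr alpha) + (1 + (RD + cmod D2) powr alpha)"
  have Cpos: "C > 0" unfolding C_def using assms(2) norm_ge_zero[of D1] norm_ge_zero[of D2]
    by (intro add_pos_pos) (auto simp del: norm_ge_zero)
  define q where "q \<rho> = measure (relay_measure RD OmegaLI)
            {r \<in> space (relay_measure RD OmegaLI). W_relay alpha D1 D2 \<rho> a1 a2 0 r < g}" for \<rho>
  have Peq: "P_SRS_HD K RD OmegaLI alpha D1 D2 a1 a2 (2 powr (2 * RD2) - 1) \<rho> = q \<rho> ^ K" for \<rho>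
    unfolding P_SRS_HD_def g_def[symmetric] q_def using assms by (intro P_eq) auto
  define lo where "lo \<rho> = real K * (ln \<rho> - ln (t * C)) / ln \<rho>" for \<rho>
  define hi where "hi \<rho> = real K * (ln \<rho> - ln (t / 4)) / ln \<rho>" for \<rho>
  have bnd: "lo \<rho> \<le> - ln (q \<rho> ^ K) / ln \<rho> \<and> - ln (q \<rho> ^ K) / ln \<rho> \<le> hi \<rho>" if rho: "\<rho> \<ge> max t 2" for \<rho>
  proof -
    have r: "\<rho> \<ge> t" "\<rho> > 0" "\<rho> > 1" using rho by auto
    have b1: "t / (4 * \<rho>) \<le> q \<rho>" and b2: "q \<rho> \<le> t * C / \<rho>"
      using q_bounds[OF assms(2,3,4,9) ag g t_def r(1,2), of D1 D2] unfolding q_def C_def by auto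
    have qpos: "q \<rho> > 0" using b1 tpos r by (smt (verit) divide_pos_pos)
    have lnr: "ln \<rho> > 0" using r by simp
    have l1: "ln (t / 4) - ln \<rho> \<le> ln (q \<rho>)"
    proof -
      have "ln (t / (4 * \<rho>)) \<le> ln (q \<rho>)" using b1 tpos r by (intro ln_mono) auto
      moreover have "ln (t / (4 * \<rho>)) = ln (t / 4) - ln \<rho>" using tpos r by (simp add: ln_div ln_mult)
      ultimately show ?thesis by simp
    qed
    have l2: "ln (q \<rho>) \<le> ln (t * C) - ln \<rho>"
    proof -
      have "ln (q \<rho>) \<le> ln (t * C / \<rho>)" using b2 qpos by (intro ln_mono) auto
      moreover have "ln (t * C / \<rho>) = ln (t * C) - ln \<rho>" using tpos Cpos r by (simp add: ln_div)
      ultimately show ?thesis by simp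
    qed
    have e: "- ln (q \<rho> ^ K) = real K * (- ln (q \<rho>))" using qpos by (simp add: ln_realpow)
    have m1: "real K * (ln \<rho> - ln (t * C)) \<le> real K * (- ln (q \<rho>))" using l2 by (intro mult_left_mono) auto
    have m2: "real K * (- ln (q \<rho>)) \<le> real K * (ln \<rho> - ln (t / 4))" using l1 by (intro mult_left_mono) auto
    have A: "real K * (ln \<rho> - ln (t * C)) / ln \<rho> \<le> (real K * (- ln (q \<rho>))) / ln \<rho>"
      and B: "(real K * (- ln (q \<rho>))) / ln \<rho> \<le> real K * (ln \<rho> - ln (t / 4)) / ln \<rho>"
      using divide_right_mono[OF m1 less_imp_le[OF lnr]] divide_right_mono[OF m2 less_imp_le[OF lnr]] by auto
    show ?thesis unfolding lo_def hi_def e using A B by blast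
  qed
  have ev: "eventually (\<lambda>\<rho>. lo \<rho> \<le> - ln (q \<rho> ^ K) / ln \<rho>) at_top"
    using eventually_ge_at_top[of "max t 2"] by eventually_elim (use bnd in blast)
  have ev2: "eventually (\<lambda>\<rho>. - ln (q \<rho> ^ K) / ln \<rho> \<le> hi \<rho>) at_top"
    using eventually_ge_at_top[of "max t 2"] by eventually_elim (use bnd in blast)
  have "((\<lambda>\<rho>. - ln (q \<rho> ^ K) / ln \<rho>) \<longlongrightarrow> real K) at_top"
    by (rule tendsto_sandwich[OF ev ev2]) (unfold lo_def hi_def, (rule lim_aux)+)
  then show ?thesis unfolding Peq .
qed

end
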